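(* Let $G=(V,E)$ be a $k$-edge-connected multigraph with $k\ge1$, let $\bar x\in\mathbb{R}^E_{\ge0}$ be defined by $\bar x_e=\tfrac3k$ for all $e\in E$, and let $\emptyset\ne S\subseteq V$ satisfy $|\delta(S)|\le\tfrac43k$. Then for every partition $\Pi$ of $S$ into nonempty parts, $$\sum_{P\in\Pi}\bar x\big(\delta_{G[S]}(P)\big)\ \ge\ 2(|\Pi|-1),$$ i.e. the restriction of $\bar x$ to the edges of $G[S]$ lies in the dominant of the spanning tree polytope of $G[S]$.
   Context: $\delta(S)$ is the set of edges of $G$ with exactly one endpoint in $S$; $G[S]$ is the subgraph induced by $S$ and $\delta_{G[S]}(P)$ is the set of edges of $G[S]$ with exactly one endpoint in $P$. For $F\subseteq E$, $\bar x(F)=\sum_{e\in F}\bar x_e$. $k$-edge-connected means $|\delta(U)|\ge k$ for all $\emptyset\neq U\subsetneq V$. *)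

theory Defs
  imports Complex_Main "HOL-Library.Disjoint_Sets"
begin

text \<open>A finite multigraph is given by a finite vertex set V, a finite set E of edge
  identifiers, and an endpoint map ends :: 'e => 'v * 'v (parallel edges allowed).\<close>

definition multigraph :: "'v set \<Rightarrow> 'e set \<Rightarrow> ('e \<Rightarrow> 'v \<times> 'v) \<Rightarrow> bool" where
  "multigraph V E ends \<longleftrightarrow> finite V \<and> finite E \<and>
     (\<forall>e\<in>E. fst (ends e) \<in> V \<and> snd (ends e) \<in> V)"

definition cut :: "'e set \<Rightarrow> ('e \<Rightarrow> 'v \<times> 'v) \<Rightarrow> 'v set \<Rightarrow> 'e set" where
  "cut E ends S = {e\<in>E. (fst (ends e) \<in> S) \<noteq> (snd (ends e) \<in> S)}"

definition induced_edges :: "'e set \<Rightarrow> ('e \<Rightarrow> 'v \<times> 'v) \<Rightarrow> 'v set \<Rightarrow> 'e set" where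
  "induced_edges E ends S = {e\<in>E. fst (ends e) \<in> S \<and> snd (ends e) \<in> S}"

definition k_edge_connected :: "nat \<Rightarrow> 'v set \<Rightarrow> 'e set \<Rightarrow> ('e \<Rightarrow> 'v \<times> 'v) \<Rightarrow> bool" where
  "k_edge_connected k V E ends \<longleftrightarrow>
     (\<forall>U. U \<noteq> {} \<and> U \<subset> V \<longrightarrow> card (cut E ends U) \<ge> k)"

end

theory Submission
  imports Defs
begin

theorem mainTheorem7:
  fixes V :: "'v set" and E :: "'e set" and ends :: "'e \<Rightarrow> 'v \<times> 'v"
    and k :: nat and xbar :: "'e \<Rightarrow> real" and S :: "'v set"
  assumes "multigraph V E ends"
    and "k \<ge> 1"
    and "k_edge_connected k V E ends"
    and "\<forall>e\<in>E. xbar e = 3 / real k"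
    and "S \<noteq> {}" and "S \<subseteq> V"
    and "real (card (cut E ends S)) \<le> 4 / 3 * real k"
  shows "\<forall>Parts. partition_on S Parts \<longrightarrow>
           (\<Sum>P\<in>Parts. (\<Sum>e\<in>cut (induced_edges E ends S) ends P. xbar e))
             \<ge> 2 * (real (card Parts) - 1)"
proof (intro allI impI)
  fix Parts assume part: "partition_on S Parts"
  have finV: "finite V" and finE: "finite E" using assms(1) by (auto simp: multigraph_def)
  have finS: "finite S" using finV assms(6) finite_subset by blast
  have finP: "finite Parts" using part finS by (simp add: finite_elements)
  let ?I = "induced_edges E ends S"
  let ?cI = "\<lambda>P. cut ?I ends P"
  have cIE: "?cI P \<subseteq> E" for P by (auto simp: cut_def induced_edges_def)
  have finCI: "finite (?cI P)" for P using cIE finE finite_subset by blast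
  have LHS: "(\<Sum>P\<in>Parts. (\<Sum>e\<in>?cI P. xbar e)) = (\<Sum>P\<in>Parts. 3 / real k * real (card (?cI P)))"
  proof (rule sum.cong[OF refl])
    fix P assume "P \<in> Parts"
    have "(\<Sum>e\<in>?cI P. xbar e) = (\<Sum>e\<in>?cI P. 3 / real k)"
      using cIE assms(4) by (intro sum.cong) auto
    then show "(\<Sum>e\<in>?cI P. xbar e) = 3 / real k * real (card (?cI P))" by simp
  qed
  show "(\<Sum>P\<in>Parts. (\<Sum>e\<in>?cI P. xbar e)) \<ge> 2 * (real (card Parts) - 1)"
  proof (cases "card Parts \<le> 1")
    case True
    have "0 \<le> (\<Sum>P\<in>Parts. 3 / real k * real (card (?cI P)))"
      by (intro sum_nonneg) simp
    then show ?thesis using True LHS by simp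
  next
    case False
    let ?n = "card Parts"
    define A where "A P = cut E ends P \<inter> cut E ends S" for P
    have Psub: "P \<subseteq> S" "P \<noteq> {}" if "P \<in> Parts" for P
      using part that unfolding partition_on_def by auto
    have cutk: "k \<le> card (cut E ends P)" if "P \<in> Parts" for P
    proof -
      have "\<exists>Q\<in>Parts. Q \<noteq> P"
      proof (rule ccontr)
        assume "\<not> (\<exists>Q\<in>Parts. Q \<noteq> P)"
        then have "Parts \<subseteq> {P}" by blast
        then have "card Parts \<le> card {P}" by (intro card_mono) auto
        with False show False by simp
      qed
      then obtain Q where Q: "Q \<in> Parts" "Q \<noteq> P" by blast
      have "P \<inter> Q = {}" using part Q that unfolding partition_on_def disjoint_def by blast
      moreover have "Q \<noteq> {}" "Q \<subseteq> V" using Psub[OF Q(1)] assms(6) by auto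
      ultimately have "P \<noteq> V" using Psub[OF that] by blast
      then have "P \<subset> V" using Psub[OF that] assms(6) by blast
      then show ?thesis using assms(3) Psub[OF that] unfolding k_edge_connected_def by blast
    qed
    have split: "card (cut E ends P) \<le> card (?cI P) + card (A P)" if "P \<in> Parts" for P
    proof -
      have "cut E ends P \<subseteq> ?cI P \<union> A P"
        using Psub[OF that] unfolding A_def cut_def induced_edges_def by auto
      then have "card (cut E ends P) \<le> card (?cI P \<union> A P)"
        using finCI[of P] finE by (intro card_mono) (auto simp: A_def cut_def)
      also have "\<dots> \<le> card (?cI P) + card (A P)" by (rule card_Un_le)
      finally show ?thesis .
    qed
    have disjA: "A P \<inter> A Q = {}" if "P \<in> Parts" "Q \<in> Parts" "P \<noteq> Q" for P Q
    proof -
      have d: "P \<inter> Q = {}" using part that unfolding partition_on_def disjoint_def by blast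
      show ?thesis using d Psub[OF that(1)] Psub[OF that(2)]
        unfolding A_def cut_def by auto
    qed
    have "(\<Sum>P\<in>Parts. card (A P)) = card (\<Union>P\<in>Parts. A P)"
      proof (rule card_UN_disjoint[symmetric])
      show "finite Parts" by (rule finP)
      show "\<forall>P\<in>Parts. finite (A P)" using finE by (auto simp: A_def cut_def)
      show "\<forall>P\<in>Parts. \<forall>Q\<in>Parts. P \<noteq> Q \<longrightarrow> A P \<inter> A Q = {}" using disjA by blast
    qed
    also have "\<dots> \<le> card (cut E ends S)"
      by (intro card_mono) (auto simp: A_def cut_def finE)
    finally have sA: "(\<Sum>P\<in>Parts. card (A P)) \<le> card (cut E ends S)" .
    have "?n * k = (\<Sum>P\<in>Parts. k)" by simp
    also have "\<dots> \<le> (\<Sum>P\<in>Parts. card (cut E ends P))" by (intro sum_mono cutk)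
    also have "\<dots> \<le> (\<Sum>P\<in>Parts. card (?cI P) + card (A P))" by (intro sum_mono split)
    also have "\<dots> = (\<Sum>P\<in>Parts. card (?cI P)) + (\<Sum>P\<in>Parts. card (A P))" by (rule sum.distrib)
    finally have main: "?n * k \<le> (\<Sum>P\<in>Parts. card (?cI P)) + card (cut E ends S)" using sA by linarith
    define s where "s = (\<Sum>P\<in>Parts. card (?cI P))"
    have mainr: "real ?n * real k \<le> real s + 4 / 3 * real k"
      proof -
      have "real (?n * k) \<le> real (s + card (cut E ends S))" using main unfolding s_def by (rule of_nat_mono)
      then show ?thesis using assms(7) by simp
    qed
    have "(\<Sum>P\<in>Parts. 3 / real k * real (card (?cI P))) = 3 / real k * real s"
      unfolding s_def by (simp add: sum_distrib_left)
    also have "\<dots> \<ge> 3 * real ?n - 4"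
    proof -
      have kp: "real k > 0" using assms(2) by simp
      have "3 * real s \<ge> (3 * real ?n - 4) * real k" using mainr by (simp add: algebra_simps)
      then show ?thesis using kp by (simp add: field_simps)
    qed
    finally have "(\<Sum>P\<in>Parts. 3 / real k * real (card (?cI P))) \<ge> 3 * real ?n - 4" .
    then show ?thesis using LHS False by simp
  qed
qed

end
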